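(* Let $c_0(t)$ be an analytic function, not identically zero, and define analytic functions $c_n(t)$, $n\ge 1$, by $$c_1=\dot c_0,\qquad c_{n+1}=\dot c_n+\sum_{s=0}^{n-1}c_s c_{n-1-s}\quad(n\ge 1).$$ Let $U(t)=-c_0(t)$ and define $\sigma_m(t)$, $m\ge 1$, by $\sigma_1=-U$, $\sigma_2=-\dot U$, and $$\sigma_{m+1}=\dot\sigma_m+\sum_{k=1}^{m-1}\sigma_k\sigma_{m-k}\quad(m\ge 1).$$ Then $\sigma_m(t)=c_{m-1}(t)$ for all $m\ge 1$.
   Context: The recursion for $c_n$ is the moment recursion of the unrestricted Toda chain in the case $u_0(t)=c_0(t)$ (equivalently, boundary condition $b_{-1}\equiv 0$). The $\sigma_m$ are the conserved densities of the Korteweg–de Vries equation associated with the Schrödinger potential $U$ (with the variable $t$ playing the role of the spatial variable $x$). A dot denotes differentiation in $t$. *)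

theory Defs
  imports "HOL-Complex_Analysis.Complex_Analysis"
begin

function toda_c :: "(complex \<Rightarrow> complex) \<Rightarrow> nat \<Rightarrow> complex \<Rightarrow> complex" where
  "toda_c f 0 = f"
| "toda_c f (Suc 0) = deriv f"
| "toda_c f (Suc (Suc n)) =
     (\<lambda>t. deriv (toda_c f (Suc n)) t + (\<Sum>s\<le>n. toda_c f s t * toda_c f (n - s) t))"
  by pat_completeness auto
termination by (relation "Wellfounded.measure (\<lambda>(f, n). n)") auto

text \<open>KdV conserved densities (indexed from 1; index 0 unused, set to 0):
  sigma_1 = -U, sigma_2 = -U', sigma_(m+1) = sigma_m' + sum_(k=1)^(m-1) sigma_k sigma_(m-k).\<close>
function kdv_sigma :: "(complex \<Rightarrow> complex) \<Rightarrow> nat \<Rightarrow> complex \<Rightarrow> complex" where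
  "kdv_sigma U 0 = (\<lambda>t. 0)"
| "kdv_sigma U (Suc 0) = (\<lambda>t. - U t)"
| "kdv_sigma U (Suc (Suc 0)) = (\<lambda>t. - deriv U t)"
| "kdv_sigma U (Suc (Suc (Suc m))) =
     (\<lambda>t. deriv (kdv_sigma U (Suc (Suc m))) t
          + (\<Sum>k\<in>{1..Suc m}. kdv_sigma U k t * kdv_sigma U (Suc (Suc m) - k) t))"
  by pat_completeness auto
termination by (relation "Wellfounded.measure (\<lambda>(U, n). n)") auto

end

theory Submission
  imports Defs
begin

lemma key:
  fixes c0 :: "complex \<Rightarrow> complex" and S :: "complex set"
  assumes "open S" and "c0 holomorphic_on S"
  shows "\<forall>t\<in>S. kdv_sigma (\<lambda>t. - c0 t) (Suc m) t = toda_c c0 m t"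
proof (induction m rule: less_induct)
  case (less m)
  show ?case
  proof (cases m)
    case 0 then show ?thesis by simp
  next
    case (Suc n)
    show ?thesis
    proof (cases n)
      case 0
      show ?thesis
      proof
        fix t assume t: "t \<in> S"
        have "c0 field_differentiable at t"
          using assms t holomorphic_on_imp_differentiable_at by blast
        then have "deriv (\<lambda>t. - c0 t) t = - deriv c0 t"
          by (simp add: deriv_minus)
        then show "kdv_sigma (\<lambda>t. - c0 t) (Suc m) t = toda_c c0 m t"
          using Suc 0 by simp
      qed
    next
      case (Suc k)
      have IH: "\<And>j. j \<le> Suc k \<Longrightarrow> \<forall>t\<in>S. kdv_sigma (\<lambda>t. - c0 t) (Suc j) t = toda_c c0 j t"
        using less \<open>m = Suc n\<close> \<open>n = Suc k\<close> by auto
      show ?thesis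
      proof
        fix t assume t: "t \<in> S"
        have ev: "eventually (\<lambda>x. kdv_sigma (\<lambda>t. - c0 t) (Suc (Suc k)) x = toda_c c0 (Suc k) x) (nhds t)"
          using IH[of "Suc k"] assms(1) t eventually_nhds by blast
        have d: "deriv (kdv_sigma (\<lambda>t. - c0 t) (Suc (Suc k))) t = deriv (toda_c c0 (Suc k)) t"
          by (rule deriv_cong_ev[OF ev refl])
        have "(\<Sum>j\<in>{1..Suc k}. kdv_sigma (\<lambda>t. - c0 t) j t * kdv_sigma (\<lambda>t. - c0 t) (Suc (Suc k) - j) t)
            = (\<Sum>s\<in>{0..k}. kdv_sigma (\<lambda>t. - c0 t) (Suc s) t * kdv_sigma (\<lambda>t. - c0 t) (Suc (Suc k) - Suc s) t)"
          by (subst sum.shift_bounds_cl_Suc_ivl[symmetric]) simp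
        also have "\<dots> = (\<Sum>s\<le>k. toda_c c0 s t * toda_c c0 (k - s) t)"
        proof -
          have "\<And>s. s \<le> k \<Longrightarrow> kdv_sigma (\<lambda>t. - c0 t) (Suc s) t * kdv_sigma (\<lambda>t. - c0 t) (Suc (Suc k) - Suc s) t
                 = toda_c c0 s t * toda_c c0 (k - s) t"
          proof -
            fix s assume s: "s \<le> k"
            have e: "Suc (Suc k) - Suc s = Suc (k - s)" using s by simp
            show "kdv_sigma (\<lambda>t. - c0 t) (Suc s) t * kdv_sigma (\<lambda>t. - c0 t) (Suc (Suc k) - Suc s) t
                 = toda_c c0 s t * toda_c c0 (k - s) t"
              unfolding e using IH[of s] IH[of "k - s"] s t by auto
          qed
          then show ?thesis by (simp add: atMost_atLeast0)
        qed
        finally show "kdv_sigma (\<lambda>t. - c0 t) (Suc m) t = toda_c c0 m t"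
          using d \<open>m = Suc n\<close> \<open>n = Suc k\<close> by simp
      qed
    qed
  qed
qed

theorem mainTheorem2:
  fixes c0 :: "complex \<Rightarrow> complex" and S :: "complex set"
  assumes "open S" and "connected S"
    and "c0 holomorphic_on S"
    and "\<exists>t\<in>S. c0 t \<noteq> 0"
  shows "\<forall>m\<ge>1. \<forall>t\<in>S. kdv_sigma (\<lambda>t. - c0 t) m t = toda_c c0 (m - 1) t"
proof (intro allI impI)
  fix m :: nat assume "m \<ge> 1"
  then obtain j where "m = Suc j" by (cases m) auto
  then show "\<forall>t\<in>S. kdv_sigma (\<lambda>t. - c0 t) m t = toda_c c0 (m - 1) t"
    using key[OF assms(1,3), of j] by simp
qed

end
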